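(* Let $A$ be a non-zero $n\times m$ matrix with entries in $[0,1]$, let $v$ be the value of the zero-sum game $A$, and let $x^*\in\Delta_n$ be any minimax strategy of the row player (i.e. $f(x^* )=v$). Suppose the row player plays the multiplicative weight update (MWU) algorithm with a non-increasing step size sequence $(\mu_t)$ for which there exists $t'\in\mathbb{N}$ with $\mu_{t'}\le 1$, and the column player plays the LRCA algorithm. Then $$RE(x^*\|x_{2k-1})-RE(x^*\|x_{2k+1})\ \ge\ \tfrac12\,\mu_{2k}\,\alpha_{2k}\,\big(f(x_{2k-1})-v\big)\qquad\text{for all }k\in\mathbb{N}\text{ with }2k\ge t',$$ where $\alpha_{2k}$ is the mixing coefficient used by LRCA at round $2k$.
   Context: Repeated two-player zero-sum game: $A$ is an $n\times m$ non-zero matrix with entries in $[0,1]$; $\Delta_n,\Delta_m$ are the probability simplices. At round $t=1,2,\dots$ the row player plays $x_t\in\Delta_n$, the column player plays $y_t\in\Delta_m$; the row player wants to minimize $x_t^\top Ay_t$, the column player to maximize it. $v=\max_{y}\min_x x^\top Ay=\min_x\max_y x^\top Ay$ is the value of the game and $f(x):=\max_{y\in\Delta_m}x^\top Ay$. A minimax strategy of the row player is $x$ with $f(x)=v$; a minimax strategy of the column player is $y$ with $\min_{x\in\Delta_n}x^\top Ay=v$. Relative entropy: $RE(X_1\|X_2)=\sum_{i=1}^n X_1(i)\log\frac{X_1(i)}{X_2(i)}$. MWU for the row player: starting from an initial $x_1$ with all entries positive, $x_{t+1}(i)=x_t(i)e^{-\mu_t e_i^\top Ay_t}/Z_t$ with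 $Z_t=\sum_{j}x_t(j)e^{-\mu_t e_j^\top Ay_t}$, $\mu_t\ge 0$, $e_i$ the $i$-th unit vector. LRCA algorithm for the column player (who knows $A$, and fixes one minimax strategy $y^*$ of the column player): at odd rounds $t$, $y_t=y^*$; at even rounds $t$, let $e_t\in\arg\max_{e\in\{e_1,\dots,e_m\}}x_{t-1}^\top Ae$ (unit vectors in $\mathbb{R}^m$), $\alpha_t=\frac{f(x_{t-1})-v}{\max(n/4,\,2)}$, and $y_t=(1-\alpha_t)y^*+\alpha_t e_t$. *)

theory Defs
  imports "HOL-Analysis.Analysis"
begin

text \<open>Matrix A is n x m with rows indexed by 'n and columns by 'm;
  the payoff of (x,y) is x^T A y = x \<bullet> (A *v y).\<close>

definition prob_simplex :: "(real ^ 'k) set" where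
  "prob_simplex = {x. (\<forall>i. 0 \<le> x $ i) \<and> (\<Sum>i\<in>UNIV. x $ i) = 1}"

definition payoff :: "real ^ 'm ^ 'n \<Rightarrow> real ^ 'n \<Rightarrow> real ^ 'm \<Rightarrow> real" where
  "payoff A x y = x \<bullet> (A *v y)"

definition fmax :: "real ^ 'm ^ 'n \<Rightarrow> real ^ 'n \<Rightarrow> real" where
  "fmax A x = (SUP y\<in>prob_simplex. payoff A x y)"

definition game_value :: "real ^ 'm ^ 'n \<Rightarrow> real" where
  "game_value A = (INF x\<in>prob_simplex. fmax A x)"

definition row_minimax :: "real ^ 'm ^ 'n \<Rightarrow> real ^ 'n \<Rightarrow> bool" where
  "row_minimax A x \<longleftrightarrow> x \<in> prob_simplex \<and> fmax A x = game_value A"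

definition col_minimax :: "real ^ 'm ^ 'n \<Rightarrow> real ^ 'm \<Rightarrow> bool" where
  "col_minimax A y \<longleftrightarrow> y \<in> prob_simplex \<and> (INF x\<in>prob_simplex. payoff A x y) = game_value A"

definition rel_entropy :: "real ^ 'n \<Rightarrow> real ^ 'n \<Rightarrow> real" where
  "rel_entropy X1 X2 = (\<Sum>i\<in>UNIV. X1 $ i * ln (X1 $ i / X2 $ i))"

definition unitv :: "'m \<Rightarrow> real ^ 'm" where
  "unitv j = axis j 1"

definition mwu_play :: "real ^ 'm ^ 'n \<Rightarrow> (nat \<Rightarrow> real) \<Rightarrow> (nat \<Rightarrow> real ^ 'n)
    \<Rightarrow> (nat \<Rightarrow> real ^ 'm) \<Rightarrow> bool" where
  "mwu_play A \<mu> x y \<longleftrightarrow>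
     x 1 \<in> prob_simplex \<and> (\<forall>i. 0 < x 1 $ i) \<and>
     (\<forall>t\<ge>1. 0 \<le> \<mu> t) \<and>
     (\<forall>t\<ge>1. \<forall>i. x (t + 1) $ i =
        x t $ i * exp (- \<mu> t * (A *v y t) $ i) /
        (\<Sum>j\<in>UNIV. x t $ j * exp (- \<mu> t * (A *v y t) $ j)))"

definition lrca_alpha :: "real ^ 'm ^ 'n \<Rightarrow> (nat \<Rightarrow> real ^ 'n) \<Rightarrow> nat \<Rightarrow> real" where
  "lrca_alpha A x t = (fmax A (x (t - 1)) - game_value A) / max (real CARD('n) / 4) 2"

definition lrca_play :: "real ^ 'm ^ 'n \<Rightarrow> real ^ 'm \<Rightarrow> (nat \<Rightarrow> real ^ 'n)
    \<Rightarrow> (nat \<Rightarrow> real ^ 'm) \<Rightarrow> bool" where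
  "lrca_play A ystar x y \<longleftrightarrow>
     (\<forall>t\<ge>1. odd t \<longrightarrow> y t = ystar) \<and>
     (\<forall>t\<ge>1. even t \<longrightarrow> (\<exists>j.
        (\<forall>j'. payoff A (x (t - 1)) (unitv j') \<le> payoff A (x (t - 1)) (unitv j)) \<and>
        y t = (1 - lrca_alpha A x t) *\<^sub>R ystar + lrca_alpha A x t *\<^sub>R unitv j))"

end

theory Submission
  imports Defs
begin

lemma exp_neg_quad: fixes u :: real assumes "0 \<le> u" shows "exp (- u) \<le> 1 - u + u^2/2"
proof -
  let ?g = "\<lambda>u::real. 1 - u + u^2/2 - exp (- u)"
  have "?g 0 \<le> ?g u"
  proof (rule DERIV_nonneg_imp_nondecreasing[OF assms])
    fix z :: real assume "0 \<le> z" "z \<le> u"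
    have "DERIV ?g z :> (- 1 + z + exp (- z))"
      by (auto intro!: derivative_eq_intros simp: power2_eq_square)
    moreover have "exp (- z) \<ge> 1 + (- z)" by (rule exp_ge_add_one_self)
    ultimately show "\<exists>y. DERIV ?g z :> y \<and> y \<ge> 0" using \<open>0 \<le> z\<close> by (intro exI[of _ "- 1 + z + exp (- z)"]) auto
  qed
  then show ?thesis by simp
qed

lemma payoff_expand: "payoff A x y = (\<Sum>i\<in>UNIV. \<Sum>j\<in>UNIV. x $ i * A $ i $ j * y $ j)"
  unfolding payoff_def inner_vec_def matrix_vector_mult_def
  by (simp add: sum_distrib_left mult.assoc)

lemma mv_comp: "(A *v y) $ i = (\<Sum>j\<in>UNIV. A $ i $ j * y $ j)"
  by (simp add: matrix_vector_mult_def)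

lemma unitv_simplex: "unitv j \<in> prob_simplex"
  unfolding prob_simplex_def unitv_def by (auto simp: axis_def)

lemma simplex_ne: "prob_simplex \<noteq> {}"
  using unitv_simplex by blast

lemma payoff_nonneg:
  assumes "\<forall>i j. 0 \<le> A $ i $ j \<and> A $ i $ j \<le> 1" "x \<in> prob_simplex" "y \<in> prob_simplex"
  shows "0 \<le> payoff A x y"
  using assms unfolding payoff_expand prob_simplex_def
  by (intro sum_nonneg mult_nonneg_nonneg) auto

lemma payoff_le1:
  assumes "\<forall>i j. 0 \<le> A $ i $ j \<and> A $ i $ j \<le> 1" "x \<in> prob_simplex" "y \<in> prob_simplex"
  shows "payoff A x y \<le> 1"
proof -
  have "payoff A x y \<le> (\<Sum>i\<in>UNIV. \<Sum>j\<in>UNIV. x $ i * y $ j)"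
    unfolding payoff_expand
  proof (intro sum_mono)
    fix i j
    have "x $ i * A $ i $ j \<le> x $ i * 1"
      using assms unfolding prob_simplex_def by (intro mult_left_mono) auto
    then show "x $ i * A $ i $ j * y $ j \<le> x $ i * y $ j"
      using assms(3) unfolding prob_simplex_def by (simp add: mult_right_mono)
  qed
  also have "\<dots> = 1" using assms unfolding prob_simplex_def
    by (simp add: sum_distrib_left[symmetric] sum_distrib_right[symmetric])
  finally show ?thesis .
qed

lemma payoff_le_fmax:
  assumes "\<forall>i j. 0 \<le> A $ i $ j \<and> A $ i $ j \<le> 1" "x \<in> prob_simplex" "y \<in> prob_simplex"
  shows "payoff A x y \<le> fmax A x"
  unfolding fmax_def
  by (rule cSUP_upper[OF assms(3)]) (use payoff_le1[OF assms(1,2)] in \<open>auto intro!: bdd_aboveI[of _ 1]\<close>)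

lemma fmax_nonneg:
  assumes "\<forall>i j. 0 \<le> A $ i $ j \<and> A $ i $ j \<le> 1" "x \<in> prob_simplex"
  shows "0 \<le> fmax A x"
  using payoff_nonneg[OF assms unitv_simplex] payoff_le_fmax[OF assms unitv_simplex] by (rule order_trans)

lemma value_le_fmax:
  assumes "\<forall>i j. 0 \<le> A $ i $ j \<and> A $ i $ j \<le> 1" "x \<in> prob_simplex"
  shows "game_value A \<le> fmax A x"
  unfolding game_value_def
  by (rule cINF_lower[OF _ assms(2)]) (use fmax_nonneg[OF assms(1)] in \<open>auto intro!: bdd_belowI[of _ 0]\<close>)

lemma col_le:
  assumes "\<forall>i j. 0 \<le> A $ i $ j \<and> A $ i $ j \<le> 1" "col_minimax A y" "x \<in> prob_simplex"
  shows "game_value A \<le> payoff A x y"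
proof -
  have y: "y \<in> prob_simplex" using assms(2) col_minimax_def by blast
  have "(INF x\<in>prob_simplex. payoff A x y) \<le> payoff A x y"
    by (rule cINF_lower[OF _ assms(3)]) (use payoff_nonneg[OF assms(1) _ y] in \<open>auto intro!: bdd_belowI[of _ 0]\<close>)
  then show ?thesis using assms(2) unfolding col_minimax_def by simp
qed

lemma payoff_lin: "payoff A x y = (\<Sum>j\<in>UNIV. y $ j * payoff A x (unitv j))"
proof -
  have e: "\<And>i j. (\<Sum>k\<in>UNIV. x $ i * A $ i $ k * unitv j $ k) = x $ i * A $ i $ j"
    unfolding unitv_def axis_def by (simp add: if_distrib cong: if_cong)
  have "(\<Sum>j\<in>UNIV. y $ j * payoff A x (unitv j)) = (\<Sum>j\<in>UNIV. \<Sum>i\<in>UNIV. y $ j * (x $ i * A $ i $ j))"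
    unfolding payoff_expand e by (simp add: sum_distrib_left)
  also have "\<dots> = (\<Sum>i\<in>UNIV. \<Sum>j\<in>UNIV. x $ i * A $ i $ j * y $ j)"
    by (subst sum.swap) (simp add: algebra_simps)
  finally show ?thesis unfolding payoff_expand by simp
qed

lemma fmax_best:
  assumes "\<forall>i j. 0 \<le> A $ i $ j \<and> A $ i $ j \<le> 1" "x \<in> prob_simplex"
    "\<forall>j'. payoff A x (unitv j') \<le> payoff A x (unitv j)"
  shows "fmax A x = payoff A x (unitv j)"
  unfolding fmax_def
proof (rule cSup_eq_maximum)
  show "payoff A x (unitv j) \<in> payoff A x ` prob_simplex" using unitv_simplex by blast
next
  fix z assume "z \<in> payoff A x ` prob_simplex"
  then obtain y where y: "y \<in> prob_simplex" "z = payoff A x y" by blast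
  have "z = (\<Sum>k\<in>UNIV. y $ k * payoff A x (unitv k))" using y payoff_lin by metis
  also have "\<dots> \<le> (\<Sum>k\<in>UNIV. y $ k * payoff A x (unitv j))"
    using y assms(3) unfolding prob_simplex_def by (intro sum_mono mult_left_mono) auto
  also have "\<dots> = payoff A x (unitv j)" using y unfolding prob_simplex_def by (simp add: sum_distrib_right[symmetric])
  finally show "z \<le> payoff A x (unitv j)" .
qed

lemma comp_payoff: "(A *v y) $ i = payoff A (unitv i) y"
  unfolding payoff_def unitv_def by (simp add: cart_eq_inner_axis inner_commute)


lemma mv_unitv: "(A *v unitv j) $ i = A $ i $ j"
  unfolding mv_comp unitv_def axis_def by (simp add: if_distrib cong: if_cong)

lemma payoff_sum: "payoff A x y = (\<Sum>i\<in>UNIV. x $ i * (A *v y) $ i)"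
  unfolding payoff_def inner_vec_def by simp

lemma mwu_pos:
  assumes "mwu_play A \<mu> x y" "1 \<le> t"
  shows "x t \<in> prob_simplex \<and> (\<forall>i. 0 < x t $ i)"
  using assms(2)
proof (induction t rule: nat_induct_at_least)
  case base
  then show ?case using assms(1) unfolding mwu_play_def by auto
next
  case (Suc t)
  let ?Z = "\<Sum>j\<in>UNIV. x t $ j * exp (- \<mu> t * (A *v y t) $ j)"
  have Zp: "0 < ?Z" using Suc.IH by (intro sum_pos) auto
  have upd: "\<And>i. x (Suc t) $ i = x t $ i * exp (- \<mu> t * (A *v y t) $ i) / ?Z"
    using assms(1) Suc.hyps unfolding mwu_play_def by (metis Suc_eq_plus1)
  have pos: "\<forall>i. 0 < x (Suc t) $ i" using Suc.IH Zp upd by simp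
  have "(\<Sum>i\<in>UNIV. x (Suc t) $ i) = ?Z / ?Z" unfolding upd by (simp add: sum_divide_distrib[symmetric])
  then have "(\<Sum>i\<in>UNIV. x (Suc t) $ i) = 1" using Zp by simp
  then show ?case using pos unfolding prob_simplex_def by (auto intro: less_imp_le)
qed

theorem lemma4:
  fixes A :: "real ^ 'm ^ 'n" and xstar :: "real ^ 'n" and ystar :: "real ^ 'm"
    and \<mu> :: "nat \<Rightarrow> real" and x :: "nat \<Rightarrow> real ^ 'n" and y :: "nat \<Rightarrow> real ^ 'm"
    and t' :: nat
  assumes "A \<noteq> 0"
    and "\<forall>i j. 0 \<le> A $ i $ j \<and> A $ i $ j \<le> 1"
    and "row_minimax A xstar"
    and "col_minimax A ystar"
    and "mwu_play A \<mu> x y"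
    and "lrca_play A ystar x y"
    and "\<forall>s t. 1 \<le> s \<longrightarrow> s \<le> t \<longrightarrow> \<mu> t \<le> \<mu> s"
    and "1 \<le> t'" and "\<mu> t' \<le> 1"
  shows "\<forall>k::nat. 1 \<le> k \<longrightarrow> t' \<le> 2 * k \<longrightarrow>
     rel_entropy xstar (x (2 * k - 1)) - rel_entropy xstar (x (2 * k + 1))
       \<ge> 1 / 2 * \<mu> (2 * k) * lrca_alpha A x (2 * k) * (fmax A (x (2 * k - 1)) - game_value A)"
proof (intro allI impI)
  fix k :: nat assume k1: "1 \<le> k" and kt: "t' \<le> 2 * k"
  note Ab = assms(2)
  define t where "t = 2 * k - 1"
  have t1: "1 \<le> t" and tS: "Suc t = 2 * k" and tSS: "2 * k + 1 = Suc t + 1" and ot: "odd t"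
    using k1 unfolding t_def by auto
  define v where "v = game_value A"
  define f where "f = fmax A (x t)"
  define \<alpha> where "\<alpha> = lrca_alpha A x (2 * k)"
  define M where "M = max (real CARD('n) / 4) 2"
  define \<mu>1 where "\<mu>1 = \<mu> t"
  define \<mu>2 where "\<mu>2 = \<mu> (2 * k)"
  have xs: "xstar \<in> prob_simplex" and fxs: "fmax A xstar = v"
    using assms(3) unfolding row_minimax_def v_def by auto
  have ys: "ystar \<in> prob_simplex" using assms(4) unfolding col_minimax_def by auto
  have x1: "x t \<in> prob_simplex" "\<forall>i. 0 < x t $ i" using mwu_pos[OF assms(5) t1] by auto
  have x2: "\<forall>i. 0 < x (2 * k) $ i" using mwu_pos[OF assms(5), of "2 * k"] k1 by auto
  have yt: "y t = ystar" using assms(6) t1 ot unfolding lrca_play_def by auto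
  have ev: "\<forall>t\<ge>1. even t \<longrightarrow> (\<exists>j.
        (\<forall>j'. payoff A (x (t - 1)) (unitv j') \<le> payoff A (x (t - 1)) (unitv j)) \<and>
        y t = (1 - lrca_alpha A x t) *\<^sub>R ystar + lrca_alpha A x t *\<^sub>R unitv j)"
    using assms(6) unfolding lrca_play_def by blast
  have "1 \<le> 2 * k" "even (2 * k)" using k1 by auto
  with ev have "\<exists>j. (\<forall>j'. payoff A (x (2 * k - 1)) (unitv j') \<le> payoff A (x (2 * k - 1)) (unitv j)) \<and>
        y (2 * k) = (1 - lrca_alpha A x (2 * k)) *\<^sub>R ystar + lrca_alpha A x (2 * k) *\<^sub>R unitv j"
    by blast
  then obtain j0 where best: "\<forall>j'. payoff A (x t) (unitv j') \<le> payoff A (x t) (unitv j0)"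
    and y2: "y (2 * k) = (1 - \<alpha>) *\<^sub>R ystar + \<alpha> *\<^sub>R unitv j0"
    unfolding \<alpha>_def t_def by blast
  have ff: "f = payoff A (x t) (unitv j0)" unfolding f_def by (rule fmax_best[OF Ab x1(1) best])
  have \<alpha>d: "\<alpha> = (f - v) / M" unfolding \<alpha>_def lrca_alpha_def f_def v_def M_def t_def by simp
  have M2: "M \<ge> 2" unfolding M_def by simp
  have v0: "0 \<le> v" using fxs fmax_nonneg[OF Ab xs] by simp
  have f1: "f \<le> 1" using ff payoff_le1[OF Ab x1(1) unitv_simplex] by simp
  have vf: "v \<le> f" unfolding v_def f_def by (rule value_le_fmax[OF Ab x1(1)])
  have "\<mu> (2 * k) \<le> \<mu> t'" using assms(7) assms(8) kt by blast
  then have \<mu>2le: "\<mu>2 \<le> 1" using assms(9) unfolding \<mu>2_def by linarith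
  have \<mu>1p: "0 \<le> \<mu>1" and \<mu>2p: "0 \<le> \<mu>2" using assms(5) t1 k1 unfolding mwu_play_def \<mu>1_def \<mu>2_def by auto
  have \<alpha>0: "0 \<le> \<alpha>" using \<alpha>d M2 vf by simp
  have "(f - v) / M \<le> (f - v) / 2" using vf M2 by (intro divide_left_mono) auto
  moreover have "(f - v) / 2 \<le> 1 / 2" using f1 v0 by (intro divide_right_mono) auto
  ultimately have \<alpha>h: "\<alpha> \<le> 1 / 2" unfolding \<alpha>d by (rule order_trans)
  define a where "a i = (A *v ystar) $ i" for i
  define b where "b i = A $ i $ j0" for i
  define d where "d i = (A *v y (2 * k)) $ i" for i
  have av: "\<And>i. v \<le> a i" unfolding a_def comp_payoff v_def by (rule col_le[OF Ab assms(4) unitv_simplex])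
  have b01: "\<And>i. 0 \<le> b i \<and> b i \<le> 1" unfolding b_def using Ab by auto
  have dd: "\<And>i. d i = (1 - \<alpha>) * a i + \<alpha> * b i"
    unfolding d_def a_def b_def y2
    by (simp add: matrix_vector_right_distrib matrix_vector_mult_scaleR mv_unitv)
  have fb: "f = (\<Sum>i\<in>UNIV. x t $ i * b i)" unfolding ff payoff_sum mv_unitv b_def ..
  have xa: "(\<Sum>i\<in>UNIV. xstar $ i * a i) \<le> v"
    using payoff_le_fmax[OF Ab xs ys] fxs unfolding payoff_sum a_def by simp
  have xb: "(\<Sum>i\<in>UNIV. xstar $ i * b i) \<le> v"
    using payoff_le_fmax[OF Ab xs unitv_simplex, of j0] fxs unfolding payoff_sum mv_unitv b_def by simp
  have xd: "(\<Sum>i\<in>UNIV. xstar $ i * d i) \<le> v"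
  proof -
    have "(\<Sum>i\<in>UNIV. xstar $ i * d i) = (\<Sum>i\<in>UNIV. (1 - \<alpha>) * (xstar $ i * a i) + \<alpha> * (xstar $ i * b i))"
      unfolding dd by (intro sum.cong refl) (simp add: algebra_simps)
    also have "\<dots> = (1 - \<alpha>) * (\<Sum>i\<in>UNIV. xstar $ i * a i) + \<alpha> * (\<Sum>i\<in>UNIV. xstar $ i * b i)"
      by (simp only: sum.distrib sum_distrib_left)
    also have "\<dots> \<le> (1 - \<alpha>) * v + \<alpha> * v"
      using xa xb \<alpha>0 \<alpha>h by (intro add_mono mult_left_mono) auto
    finally show ?thesis by (simp add: algebra_simps)
  qed
  define E1 where "E1 i = exp (- \<mu>1 * a i)" for i
  define E2 where "E2 i = exp (- \<mu>2 * d i)" for i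
  define Z1 where "Z1 = (\<Sum>j\<in>UNIV. x t $ j * E1 j)"
  define Z2 where "Z2 = (\<Sum>j\<in>UNIV. x (2 * k) $ j * E2 j)"
  define W where "W = (\<Sum>j\<in>UNIV. x t $ j * (E1 j * E2 j))"
  have Z1p: "0 < Z1" unfolding Z1_def E1_def using x1(2) by (intro sum_pos) auto
  have Wp: "0 < W" unfolding W_def E1_def E2_def using x1(2) by (intro sum_pos) auto
  have up1: "\<And>i. x (2 * k) $ i = x t $ i * E1 i / Z1"
    using assms(5) t1 unfolding mwu_play_def E1_def Z1_def a_def \<mu>1_def yt[symmetric]
    by (metis Suc_eq_plus1 tS)
  have up2: "\<And>i. x (2 * k + 1) $ i = x (2 * k) $ i * E2 i / Z2"
    using assms(5) k1 unfolding mwu_play_def E2_def Z2_def d_def \<mu>2_def by simp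
  have Z2W: "Z2 = W / Z1" unfolding Z2_def W_def up1 sum_divide_distrib by (intro sum.cong refl) simp
  have up3: "\<And>i. x (2 * k + 1) $ i = x t $ i * (E1 i * E2 i) / W"
    unfolding up2 up1 Z2W using Z1p by (simp add: field_simps)
  have x3: "\<And>i. 0 < x (2 * k + 1) $ i" using up3 x1(2) Wp unfolding E1_def E2_def by simp
  have lnr: "\<And>i. ln (x (2 * k + 1) $ i / x t $ i) = - \<mu>1 * a i - \<mu>2 * d i - ln W"
  proof -
    fix i
    have "x (2 * k + 1) $ i / x t $ i = (E1 i * E2 i) / W" using up3[of i] x1(2)[rule_format, of i] by (simp add: field_simps)
    also have "\<dots> = exp (- \<mu>1 * a i - \<mu>2 * d i) / W" unfolding E1_def E2_def by (simp add: exp_add[symmetric])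
    finally show "ln (x (2 * k + 1) $ i / x t $ i) = - \<mu>1 * a i - \<mu>2 * d i - ln W"
      using Wp by (simp add: ln_div)
  qed
  have trm: "\<And>i. xstar $ i * ln (xstar $ i / x t $ i) - xstar $ i * ln (xstar $ i / x (2 * k + 1) $ i)
      = xstar $ i * (- \<mu>1 * a i - \<mu>2 * d i - ln W)"
  proof -
    fix i
    show "xstar $ i * ln (xstar $ i / x t $ i) - xstar $ i * ln (xstar $ i / x (2 * k + 1) $ i)
      = xstar $ i * (- \<mu>1 * a i - \<mu>2 * d i - ln W)"
    proof (cases "xstar $ i = 0")
      case True then show ?thesis by simp
    next
      case False
      then have p: "0 < xstar $ i" using xs unfolding prob_simplex_def by (simp add: order_less_le)
      have "ln (xstar $ i / x t $ i) - ln (xstar $ i / x (2 * k + 1) $ i) = ln (x (2 * k + 1) $ i / x t $ i)"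
        using p x1(2)[rule_format, of i] x3[of i] by (simp add: ln_div)
      then show ?thesis unfolding lnr[symmetric] by (simp add: algebra_simps)
    qed
  qed
  have sx: "(\<Sum>i\<in>UNIV. xstar $ i) = 1" using xs unfolding prob_simplex_def by simp
  have diff: "rel_entropy xstar (x t) - rel_entropy xstar (x (2 * k + 1))
      = - \<mu>1 * (\<Sum>i\<in>UNIV. xstar $ i * a i) - \<mu>2 * (\<Sum>i\<in>UNIV. xstar $ i * d i) - ln W"
  proof -
    have "rel_entropy xstar (x t) - rel_entropy xstar (x (2 * k + 1))
        = (\<Sum>i\<in>UNIV. xstar $ i * (- \<mu>1 * a i - \<mu>2 * d i - ln W))"
      unfolding rel_entropy_def sum_subtractf[symmetric] trm ..
    also have "\<dots> = - \<mu>1 * (\<Sum>i\<in>UNIV. xstar $ i * a i) - \<mu>2 * (\<Sum>i\<in>UNIV. xstar $ i * d i) - ln W * (\<Sum>i\<in>UNIV. xstar $ i)"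
    proof -
      have "(\<Sum>i\<in>UNIV. xstar $ i * (- \<mu>1 * a i - \<mu>2 * d i - ln W)) =
         (\<Sum>i\<in>UNIV. (- \<mu>1) * (xstar $ i * a i) + (- \<mu>2) * (xstar $ i * d i) + (- ln W) * xstar $ i)"
        by (intro sum.cong refl) (simp add: algebra_simps)
      also have "\<dots> = (- \<mu>1) * (\<Sum>i\<in>UNIV. xstar $ i * a i) + (- \<mu>2) * (\<Sum>i\<in>UNIV. xstar $ i * d i) + (- ln W) * (\<Sum>i\<in>UNIV. xstar $ i)"
        by (simp only: sum.distrib sum_distrib_left)
      finally show ?thesis by simp
    qed
    finally show ?thesis using sx by simp
  qed
  define c where "c = \<mu>2 * \<alpha>"
  define K where "K = \<mu>1 + \<mu>2 * (1 - \<alpha>)"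
  define S where "S = 1 - c * f + c^2 * f / 2"
  have c0: "0 \<le> c" unfolding c_def using \<mu>2p \<alpha>0 by simp
  have ma: "\<mu>2 * \<alpha> \<le> 1 * \<alpha>" by (rule mult_right_mono[OF \<mu>2le \<alpha>0])
  then have ch: "c \<le> 1 / 2" unfolding c_def using \<alpha>h by linarith
  have Wle: "W \<le> exp (- K * v) * S"
  proof -
    have "W \<le> (\<Sum>j\<in>UNIV. x t $ j * (exp (- K * v) * (1 - c * b j + c^2 * b j / 2)))"
      unfolding W_def
    proof (intro sum_mono mult_left_mono)
      fix j
      have e1: "- \<mu>1 * a j - \<mu>2 * d j \<le> - K * v - c * b j"
      proof -
        have "\<mu>1 * v \<le> \<mu>1 * a j" using av \<mu>1p by (intro mult_left_mono) auto
        moreover have "\<mu>2 * (1 - \<alpha>) * v \<le> \<mu>2 * (1 - \<alpha>) * a j"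
          using av \<mu>2p \<alpha>h by (intro mult_left_mono) auto
        ultimately show ?thesis unfolding dd K_def c_def by (simp add: algebra_simps)
      qed
      have "E1 j * E2 j = exp (- \<mu>1 * a j - \<mu>2 * d j)" unfolding E1_def E2_def by (simp add: exp_add[symmetric])
      also have "\<dots> \<le> exp (- K * v - c * b j)" using e1 by simp
      also have "\<dots> = exp (- K * v) * exp (- (c * b j))" by (simp add: exp_add[symmetric])
      also have "\<dots> \<le> exp (- K * v) * (1 - c * b j + c^2 * b j / 2)"
      proof (rule mult_left_mono)
        have "exp (- (c * b j)) \<le> 1 - c * b j + (c * b j)^2 / 2" using c0 b01 by (intro exp_neg_quad) auto
        moreover have "(c * b j)^2 \<le> c^2 * b j"
        proof -
          have "b j * b j \<le> b j" using b01[of j] by (simp add: mult_left_le)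
          then have "(c * c) * (b j * b j) \<le> (c * c) * b j" by (rule mult_left_mono) simp
          then show ?thesis by (simp add: power2_eq_square algebra_simps)
        qed
        ultimately show "exp (- (c * b j)) \<le> 1 - c * b j + c^2 * b j / 2" by simp
      qed simp
      finally show "E1 j * E2 j \<le> exp (- K * v) * (1 - c * b j + c^2 * b j / 2)" .
    qed (use x1 in \<open>auto intro: less_imp_le\<close>)
    also have "\<dots> = exp (- K * v) * ((\<Sum>j\<in>UNIV. x t $ j) - c * (\<Sum>j\<in>UNIV. x t $ j * b j) + c^2 * (\<Sum>j\<in>UNIV. x t $ j * b j) / 2)"
    proof -
      have "(\<Sum>j\<in>UNIV. x t $ j * (exp (- K * v) * (1 - c * b j + c^2 * b j / 2))) =
        (\<Sum>j\<in>UNIV. exp (- K * v) * x t $ j + (- (exp (- K * v) * c)) * (x t $ j * b j) + (exp (- K * v) * c^2 / 2) * (x t $ j * b j))"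
        by (intro sum.cong refl) (simp add: algebra_simps)
      also have "\<dots> = exp (- K * v) * (\<Sum>j\<in>UNIV. x t $ j) + (- (exp (- K * v) * c)) * (\<Sum>j\<in>UNIV. x t $ j * b j) + (exp (- K * v) * c^2 / 2) * (\<Sum>j\<in>UNIV. x t $ j * b j)"
        by (simp only: sum.distrib sum_distrib_left)
      finally show ?thesis by (simp add: algebra_simps)
    qed
    also have "\<dots> = exp (- K * v) * S" unfolding S_def fb[symmetric] using x1(1) unfolding prob_simplex_def by simp
    finally show ?thesis .
  qed
  have Sp: "0 < S"
  proof -
    have "c * f \<le> 1 / 2 * 1" using vf v0 by (intro mult_mono[OF ch f1]) auto
    moreover have "0 \<le> c^2 * f / 2" using vf v0 by simp
    ultimately show ?thesis unfolding S_def by simp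
  qed
  have lnW: "ln W \<le> - K * v + (S - 1)"
  proof -
    have "ln W \<le> ln (exp (- K * v) * S)" using Wle Wp by simp
    also have "\<dots> = - K * v + ln S" using Sp by (simp add: ln_mult)
    also have "\<dots> \<le> - K * v + (S - 1)" using ln_le_minus_one Sp by simp
    finally show ?thesis .
  qed
  have cf: "c * f \<le> f - v"
  proof -
    have "c * f \<le> \<alpha> * f" unfolding c_def using \<mu>2le \<alpha>0 vf v0
      by (intro mult_right_mono) (use ma in auto)
    also have "\<alpha> * f = (f - v) * f / M" unfolding \<alpha>d by simp
    also have "\<dots> \<le> (f - v) * 1 / M" using f1 vf M2 by (intro divide_right_mono mult_left_mono) auto
    also have "\<dots> \<le> f - v"
    proof -
      have "(f - v) * 1 \<le> (f - v) * M" using vf M2 by (intro mult_left_mono) auto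
      then show ?thesis using M2 by (simp add: divide_simps)
    qed
    finally show ?thesis .
  qed
  have c2: "c^2 * f \<le> c * (f - v)"
    using mult_left_mono[OF cf c0] by (simp add: power2_eq_square algebra_simps)
  define G where "G = rel_entropy xstar (x t) - rel_entropy xstar (x (2 * k + 1))"
  have calc1: "- \<mu>1 * v - \<mu>2 * v + K * v - (S - 1) \<le> G"
  proof -
    have "\<mu>1 * (\<Sum>i\<in>UNIV. xstar $ i * a i) \<le> \<mu>1 * v" using xa \<mu>1p by (rule mult_left_mono)
    moreover have "\<mu>2 * (\<Sum>i\<in>UNIV. xstar $ i * d i) \<le> \<mu>2 * v" using xd \<mu>2p by (rule mult_left_mono)
    ultimately show ?thesis unfolding G_def diff using lnW by linarith
  qed
  have eq: "- \<mu>1 * v - \<mu>2 * v + K * v - (S - 1) = c * (f - v) - c^2 * f / 2"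
    unfolding K_def S_def c_def by (simp add: algebra_simps)
  have G1: "c * (f - v) - c^2 * f / 2 \<le> G" using calc1 unfolding eq .
  have G2: "c * (f - v) / 2 \<le> c * (f - v) - c^2 * f / 2" using c2 by (simp add: field_simps)
  have eq3: "1 / 2 * \<mu>2 * \<alpha> * (f - v) = c * (f - v) / 2" unfolding c_def by simp
  have fin: "1 / 2 * \<mu>2 * \<alpha> * (f - v) \<le> G" unfolding eq3 using G1 G2 by (rule order_trans[rotated])
  show "1 / 2 * \<mu> (2 * k) * lrca_alpha A x (2 * k) * (fmax A (x (2 * k - 1)) - game_value A)
      \<le> rel_entropy xstar (x (2 * k - 1)) - rel_entropy xstar (x (2 * k + 1))"
    using fin unfolding G_def \<mu>2_def \<alpha>_def v_def t_def f_def .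
qed

end
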